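(* Let $(X,d,\preccurlyeq)$ be a preordered $s$-regular $b$-metric space and let $T,S,\tilde T,\tilde S:X\to X$. Suppose there are mappings $H_t,K_t:X\to X$, $0\le t\le n$, such that $$T=H_0\preccurlyeq H_1\succcurlyeq H_2\preccurlyeq\cdots\succcurlyeq H_n=\tilde T,\qquad S=K_0\succcurlyeq K_1\preccurlyeq K_2\succcurlyeq\cdots\preccurlyeq K_n=\tilde S.$$ Suppose the mappings $H_t$, $1\le t\le n$, are isotone, $x_0\in\mathrm{Coin}(T,S)$, and: (i) for each odd $t$, $1\le t\le n$: $K_t$ covers $H_t$ from above, and every chain $C\in\mathcal{C}^*(H_t,K_t,\preccurlyeq)$ has an upper bound $w\in X$ satisfying $w\succcurlyeq H_t(w)$ for which there exists $z\in X$ with $K_t^i(z)\succcurlyeq K_t(w)\succcurlyeq H_t(w)$ for all $i\in\mathbb{N}$ and $d(H_t^i(w),K_t^i(z))\to 0$ as $i\to\infty$; (ii) for each even $t$, $1\le t\le n$: $K_t$ covers $H_t$, and every chain $C\in\mathcal{C}(H_t,K_t,\preccurlyeq)$ has a lower bound $w'\in X$ satisfying $w'\preccurlyeq H_t(w')$ for which there exists $z'\in X$ with $K_t^i(z')\preccurlyeq K_t(w')\preccurlyeq H_t(w')$ for all $i\in\mathbb{N}$ and $d(H_t^i(w'),K_t^i(z'))\to 0$ as $i\to\infty$. Then there exists a fence $x_0\preccurlyeq x_1\succcurlyeq x_2\preccurlyeq\cdots\succcurlyeq x_n$ such that for each odd $t$, $x_t\in\mathrm{Coin}(H_t,K_t)\cap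 O^*_X(x_{t-1})$ and $x_t$ is a maximal element of that set, and for each even $t$, $x_t\in\mathrm{Coin}(H_t,K_t)\cap O_X(x_{t-1})$ and $x_t$ is a minimal element of that set.
   Context: A $b$-metric space with coefficient $s\ge 1$ is a nonempty set $X$ with $d:X\times X\to[0,\infty)$ such that for all $x,y,z$: $d(x,y)=0$ iff $x=y$; $d(x,y)=d(y,x)$; $d(x,y)\le s[d(x,z)+d(z,y)]$. A preorder is a reflexive transitive relation $\preccurlyeq$; $x\succcurlyeq y$ means $y\preccurlyeq x$; $x\prec y$ means $x\preccurlyeq y$ and $x\ne y$. A preordered $s$-regular $b$-metric space $(X,d,\preccurlyeq)$ is a $b$-metric space with coefficient $s$ with a preorder such that $x\preccurlyeq y\preccurlyeq z$ implies $\max\{d(x,y),d(y,z)\}\le s^2d(x,z)$. For maps $F,G$, $F\preccurlyeq G$ means $F(x)\preccurlyeq G(x)$ for all $x$. A chain is a subset any two elements of which are comparable. A map $T$ is isotone if $x\preccurlyeq y$ implies $T(x)\preccurlyeq T(y)$; $T^i$ is the $i$-th iterate. $O_X(x_0)=\{x:x\preccurlyeq x_0\}$, $O^*_X(x_0)=\{x:x\succcurlyeq x_0\}$, $\mathrm{Coin}(T,S)=\{x:T(x)=S(x)\}$. $S$ covers $T$ if for every $x$ with $T(x)\preccurlyeq S(x)$ there is $y\preccurlyeq x$ with $S(y)=T(x)$; $S$ covers $T$ from above if for every $x$ with $T(x)\succcurlyeq S(x)$ there is $y\succcurlyeq x$ with $S(y)=T(x)$. $\mathcal{C}(T,S,\preccurlyeq)$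 is the set of chains $C$ such that for all $x,y\in C$: $T(x)\preccurlyeq S(x)$; $x\prec y$ implies $S(x)\preccurlyeq T(y)$; $S(C)\subset T(X)$. $\mathcal{C}^*(T,S,\preccurlyeq)$ is the set of chains $C$ such that for all $x,y\in C$: $T(x)\succcurlyeq S(x)$; $x\prec y$ implies $T(x)\preccurlyeq S(y)$; $S(C)\subset T(X)$. Upper/lower bounds of $C$ are with respect to $\preccurlyeq$. A minimal (maximal) element of $A$ is $w\in A$ with no $u\in A$ such that $u\prec w$ ($w\prec u$). A fence is a finite sequence with alternating relations as displayed. *)

theory Defs
  imports Complex_Main
begin

definition b_metric :: "real \<Rightarrow> ('a \<Rightarrow> 'a \<Rightarrow> real) \<Rightarrow> bool" where
  "b_metric s d \<longleftrightarrow> s \<ge> 1 \<and> (\<forall>x y. d x y \<ge> 0) \<and> (\<forall>x y. d x y = 0 \<longleftrightarrow> x = y)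
     \<and> (\<forall>x y. d x y = d y x) \<and> (\<forall>x y z. d x y \<le> s * (d x z + d z y))"

definition is_preorder :: "('a \<Rightarrow> 'a \<Rightarrow> bool) \<Rightarrow> bool" where
  "is_preorder le \<longleftrightarrow> (\<forall>x. le x x) \<and> (\<forall>x y z. le x y \<longrightarrow> le y z \<longrightarrow> le x z)"

definition preordered_s_regular_b_metric ::
  "real \<Rightarrow> ('a \<Rightarrow> 'a \<Rightarrow> real) \<Rightarrow> ('a \<Rightarrow> 'a \<Rightarrow> bool) \<Rightarrow> bool" where
  "preordered_s_regular_b_metric s d le \<longleftrightarrow> b_metric s d \<and> is_preorder le \<and>
     (\<forall>x y z. le x y \<longrightarrow> le y z \<longrightarrow> max (d x y) (d y z) \<le> s\<^sup>2 * d x z)"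

definition strict :: "('a \<Rightarrow> 'a \<Rightarrow> bool) \<Rightarrow> 'a \<Rightarrow> 'a \<Rightarrow> bool" where
  "strict le x y \<longleftrightarrow> le x y \<and> x \<noteq> y"

definition map_le :: "('a \<Rightarrow> 'a \<Rightarrow> bool) \<Rightarrow> ('a \<Rightarrow> 'a) \<Rightarrow> ('a \<Rightarrow> 'a) \<Rightarrow> bool" where
  "map_le le F G \<longleftrightarrow> (\<forall>x. le (F x) (G x))"

definition is_chain :: "('a \<Rightarrow> 'a \<Rightarrow> bool) \<Rightarrow> 'a set \<Rightarrow> bool" where
  "is_chain le C \<longleftrightarrow> (\<forall>x\<in>C. \<forall>y\<in>C. le x y \<or> le y x)"

definition isotone :: "('a \<Rightarrow> 'a \<Rightarrow> bool) \<Rightarrow> ('a \<Rightarrow> 'a) \<Rightarrow> bool" where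
  "isotone le T \<longleftrightarrow> (\<forall>x y. le x y \<longrightarrow> le (T x) (T y))"

definition O_below :: "('a \<Rightarrow> 'a \<Rightarrow> bool) \<Rightarrow> 'a \<Rightarrow> 'a set" where
  "O_below le x0 = {x. le x x0}"

definition O_above :: "('a \<Rightarrow> 'a \<Rightarrow> bool) \<Rightarrow> 'a \<Rightarrow> 'a set" where
  "O_above le x0 = {x. le x0 x}"

definition Coin :: "('a \<Rightarrow> 'b) \<Rightarrow> ('a \<Rightarrow> 'b) \<Rightarrow> 'a set" where
  "Coin T S = {x. T x = S x}"

definition covers :: "('a \<Rightarrow> 'a \<Rightarrow> bool) \<Rightarrow> ('a \<Rightarrow> 'a) \<Rightarrow> ('a \<Rightarrow> 'a) \<Rightarrow> bool" where
  "covers le S T \<longleftrightarrow> (\<forall>x. le (T x) (S x) \<longrightarrow> (\<exists>y. le y x \<and> S y = T x))"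

definition covers_above :: "('a \<Rightarrow> 'a \<Rightarrow> bool) \<Rightarrow> ('a \<Rightarrow> 'a) \<Rightarrow> ('a \<Rightarrow> 'a) \<Rightarrow> bool" where
  "covers_above le S T \<longleftrightarrow> (\<forall>x. le (S x) (T x) \<longrightarrow> (\<exists>y. le x y \<and> S y = T x))"

definition chains_C :: "('a \<Rightarrow> 'a) \<Rightarrow> ('a \<Rightarrow> 'a) \<Rightarrow> ('a \<Rightarrow> 'a \<Rightarrow> bool) \<Rightarrow> 'a set set" where
  "chains_C T S le = {C. is_chain le C \<and> (\<forall>x\<in>C. le (T x) (S x))
      \<and> (\<forall>x\<in>C. \<forall>y\<in>C. strict le x y \<longrightarrow> le (S x) (T y)) \<and> S ` C \<subseteq> range T}"

definition chains_Cstar :: "('a \<Rightarrow> 'a) \<Rightarrow> ('a \<Rightarrow> 'a) \<Rightarrow> ('a \<Rightarrow> 'a \<Rightarrow> bool) \<Rightarrow> 'a set set" where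
  "chains_Cstar T S le = {C. is_chain le C \<and> (\<forall>x\<in>C. le (S x) (T x))
      \<and> (\<forall>x\<in>C. \<forall>y\<in>C. strict le x y \<longrightarrow> le (T x) (S y)) \<and> S ` C \<subseteq> range T}"

definition is_maximal :: "('a \<Rightarrow> 'a \<Rightarrow> bool) \<Rightarrow> 'a \<Rightarrow> 'a set \<Rightarrow> bool" where
  "is_maximal le w A \<longleftrightarrow> w \<in> A \<and> \<not> (\<exists>u\<in>A. strict le w u)"

definition is_minimal :: "('a \<Rightarrow> 'a \<Rightarrow> bool) \<Rightarrow> 'a \<Rightarrow> 'a set \<Rightarrow> bool" where
  "is_minimal le w A \<longleftrightarrow> w \<in> A \<and> \<not> (\<exists>u\<in>A. strict le u w)"

end

theory Submission imports Defs begin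

lemma coin_bound:
  fixes le :: "'a \<Rightarrow> 'a \<Rightarrow> bool" and d :: "'a \<Rightarrow> 'a \<Rightarrow> real"
  assumes refl: "\<And>x. le x x" and trans: "\<And>x y z. le x y \<Longrightarrow> le y z \<Longrightarrow> le x z"
    and reg: "\<And>x y z. le x y \<Longrightarrow> le y z \<Longrightarrow> max (d x y) (d y z) \<le> s\<^sup>2 * d x z"
    and dnn: "\<And>x y. d x y \<ge> 0" and d0: "\<And>x y. d x y = 0 \<Longrightarrow> x = y"
    and iso: "isotone le H"
    and hw: "le (H w) w" and hk: "le (H w) (K w)"
    and kz: "\<And>i. i \<ge> 1 \<Longrightarrow> le (K w) ((K ^^ i) z)"
    and lim: "(\<lambda>i. d ((H ^^ i) w) ((K ^^ i) z)) \<longlonglongrightarrow> 0"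
  shows "H w = K w"
proof -
  have s2: "s\<^sup>2 \<ge> 0" by simp
  have A: "le ((H ^^ i) w) w" for i
  proof (induction i)
    case 0 show ?case using refl by simp
  next
    case (Suc i)
    have "le (H ((H ^^ i) w)) (H w)" using Suc iso unfolding isotone_def by blast
    then show ?case using hw trans by simp
  qed
  have B: "le ((H ^^ i) w) (H w)" if i1: "i \<ge> 1" for i
  proof -
    obtain j where "i = Suc j" using i1 by (cases i) auto
    then show ?thesis using A[of j] iso unfolding isotone_def by auto
  qed
  have C: "d (H w) (K w) \<le> s\<^sup>2 * (s\<^sup>2 * d ((H ^^ i) w) ((K ^^ i) z))" if "i \<ge> 1" for i
  proof -
    have "d (H w) (K w) \<le> s\<^sup>2 * d ((H ^^ i) w) (K w)"
      using reg[OF B[OF that] hk] by simp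
    moreover have "d ((H ^^ i) w) (K w) \<le> s\<^sup>2 * d ((H ^^ i) w) ((K ^^ i) z)"
      using reg[OF trans[OF B[OF that] hk] kz[OF that]] by simp
    ultimately show ?thesis by (meson mult_left_mono order_trans s2)
  qed
  have L: "(\<lambda>i. s\<^sup>2 * (s\<^sup>2 * d ((H ^^ i) w) ((K ^^ i) z))) \<longlonglongrightarrow> 0"
    using tendsto_mult_right_zero[OF tendsto_mult_right_zero[OF lim], of "s\<^sup>2" "s\<^sup>2"] by simp
  have "d (H w) (K w) \<le> 0"
    by (rule LIMSEQ_le_const[OF L]) (use C in blast)
  then have "d (H w) (K w) = 0" using dnn[of "H w" "K w"] by linarith
  then show ?thesis using d0 by blast
qed

lemma core:
  fixes le :: "'a \<Rightarrow> 'a \<Rightarrow> bool" and d :: "'a \<Rightarrow> 'a \<Rightarrow> real"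
  assumes refl: "\<And>x. le x x" and trans: "\<And>x y z. le x y \<Longrightarrow> le y z \<Longrightarrow> le x z"
    and antis: "\<And>x y. le x y \<Longrightarrow> le y x \<Longrightarrow> x = y"
    and reg: "\<And>x y z. le x y \<Longrightarrow> le y z \<Longrightarrow> max (d x y) (d y z) \<le> s\<^sup>2 * d x z"
    and dnn: "\<And>x y. d x y \<ge> 0" and d0: "\<And>x y. d x y = 0 \<Longrightarrow> x = y"
    and iso: "isotone le H"
    and cov: "covers_above le K H"
    and ch: "\<And>C. C \<in> chains_Cstar H K le \<Longrightarrow>
        \<exists>w. (\<forall>c\<in>C. le c w) \<and> le (H w) w \<and>
          (\<exists>z. (\<forall>i\<ge>1. le (K w) ((K ^^ i) z) \<and> le (H w) (K w)) \<and>
               (\<lambda>i. d ((H ^^ i) w) ((K ^^ i) z)) \<longlonglongrightarrow> 0)"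
    and a: "le (K a) (H a)"
  shows "\<exists>x. le a x \<and> is_maximal le x (Coin H K \<inter> O_above le a)"
proof -
  let ?A = "Coin H K \<inter> O_above le a"
  have ub: "\<exists>w. (\<forall>c\<in>C. le c w) \<and> H w = K w" if CC: "C \<in> chains_Cstar H K le" for C
  proof -
    obtain w z where w: "\<forall>c\<in>C. le c w" "le (H w) w"
      and z: "\<forall>i\<ge>1. le (K w) ((K ^^ i) z) \<and> le (H w) (K w)"
      and l: "(\<lambda>i. d ((H ^^ i) w) ((K ^^ i) z)) \<longlonglongrightarrow> 0"
      using ch[OF CC] by blast
    have "H w = K w"
      using coin_bound[OF refl trans reg dnn d0 iso w(2), where K=K and z=z] z l by fastforce
    then show ?thesis using w by blast
  qed
  obtain y where y: "le a y" "K y = H a" using cov a unfolding covers_above_def by blast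
  have "{y} \<in> chains_Cstar H K le"
    unfolding chains_Cstar_def is_chain_def strict_def
    using y refl iso trans unfolding isotone_def by auto
  then obtain w0 where w0: "le y w0" "H w0 = K w0" using ub by blast
  have w0A: "w0 \<in> ?A" using w0 y trans unfolding Coin_def O_above_def by auto
  have po: "partial_order_on ?A (relation_of le ?A)"
  proof -
    have "relation_of le ?A \<subseteq> ?A \<times> ?A" unfolding relation_of_def by auto
    moreover have "refl_on ?A (relation_of le ?A)" unfolding refl_on_def relation_of_def using refl by auto
    moreover have "trans (relation_of le ?A)" unfolding trans_def relation_of_def using trans by auto
    moreover have "antisym (relation_of le ?A)" unfolding antisym_def relation_of_def using antis by auto
    ultimately show ?thesis unfolding partial_order_on_def preorder_on_def by blast
  qed
  have "\<exists>u\<in>?A. \<forall>c\<in>C. le c u" if C: "C \<in> Chains (relation_of le ?A)" for C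
  proof (cases "C = {}")
    case True then show ?thesis using w0A by blast
  next
    case False
    have CA: "C \<subseteq> ?A" using C unfolding Chains_def relation_of_def by blast
    have "C \<in> chains_Cstar H K le"
      unfolding chains_Cstar_def is_chain_def strict_def
    proof (intro CollectI conjI ballI impI)
      show "le x y \<or> le y x" if "x \<in> C" "y \<in> C" for x y
        using C that unfolding Chains_def relation_of_def by blast
      show "le (K x) (H x)" if "x \<in> C" for x using CA that refl unfolding Coin_def by auto
      show "le (H x) (K y)" if "x \<in> C" "y \<in> C" "le x y \<and> x \<noteq> y" for x y
      proof -
        have "H y = K y" using CA that by (auto simp: Coin_def)
        moreover have "le (H x) (H y)" using that iso unfolding isotone_def by blast
        ultimately show ?thesis by simp
      qed
      show "K ` C \<subseteq> range H"
      proof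
        fix v assume "v \<in> K ` C"
        then obtain c where "c \<in> C" "v = K c" by blast
        then have "v = H c" using CA by (auto simp: Coin_def)
        then show "v \<in> range H" by blast
      qed
    qed
    then obtain w where w: "\<forall>c\<in>C. le c w" "H w = K w" using ub by blast
    obtain c where "c \<in> C" using False by blast
    then have "w \<in> ?A" using w CA trans unfolding Coin_def O_above_def by blast
    then show ?thesis using w by blast
  qed
  then obtain m where m: "m \<in> ?A" "\<forall>u\<in>?A. le m u \<longrightarrow> u = m"
    using predicate_Zorn[OF po] by blast
  then show ?thesis unfolding is_maximal_def strict_def O_above_def by auto
qed


lemma core_min:
  fixes le :: "'a \<Rightarrow> 'a \<Rightarrow> bool" and d :: "'a \<Rightarrow> 'a \<Rightarrow> real"
  assumes refl: "\<And>x. le x x" and trans: "\<And>x y z. le x y \<Longrightarrow> le y z \<Longrightarrow> le x z"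
    and antis: "\<And>x y. le x y \<Longrightarrow> le y x \<Longrightarrow> x = y"
    and reg: "\<And>x y z. le x y \<Longrightarrow> le y z \<Longrightarrow> max (d x y) (d y z) \<le> s\<^sup>2 * d x z"
    and dnn: "\<And>x y. d x y \<ge> 0" and d0: "\<And>x y. d x y = 0 \<Longrightarrow> x = y"
    and dsym: "\<And>x y. d x y = d y x"
    and iso: "isotone le H"
    and cov: "covers le K H"
    and ch: "\<And>C. C \<in> chains_C H K le \<Longrightarrow>
        \<exists>w'. (\<forall>c\<in>C. le w' c) \<and> le w' (H w') \<and>
          (\<exists>z'. (\<forall>i\<ge>1. le ((K ^^ i) z') (K w') \<and> le (K w') (H w')) \<and>
               (\<lambda>i. d ((H ^^ i) w') ((K ^^ i) z')) \<longlonglongrightarrow> 0)"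
    and a: "le (H a) (K a)"
  shows "\<exists>x. le x a \<and> is_minimal le x (Coin H K \<inter> O_below le a)"
proof -
  let ?le = "\<lambda>x y. le y x"
  have reg': "max (d x y) (d y z) \<le> s\<^sup>2 * d x z" if "?le x y" "?le y z" for x y z
    using reg[OF that(2) that(1)] dsym by (simp add: max.commute)
  have iso': "isotone ?le H" using iso unfolding isotone_def by blast
  have cov': "covers_above ?le K H" using cov unfolding covers_def covers_above_def by blast
  have cs: "chains_Cstar H K ?le = chains_C H K le"
    unfolding chains_Cstar_def chains_C_def is_chain_def strict_def by blast
  have "\<exists>x. ?le a x \<and> is_maximal ?le x (Coin H K \<inter> O_above ?le a)"
    by (rule core[where le="?le" and d=d and s=s, OF refl _ _ reg' dnn d0 iso' cov' _ a])
       (use trans antis ch cs in blast)+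
  then show ?thesis unfolding is_maximal_def is_minimal_def strict_def O_above_def O_below_def
    by blast
qed

theorem theorem2p4:
  fixes s :: real and d :: "'a \<Rightarrow> 'a \<Rightarrow> real" and le :: "'a \<Rightarrow> 'a \<Rightarrow> bool"
    and T S T' S' :: "'a \<Rightarrow> 'a" and H K :: "nat \<Rightarrow> 'a \<Rightarrow> 'a" and n :: nat and x0 :: 'a
  assumes space: "preordered_s_regular_b_metric s d le"
    and H0: "H 0 = T" and Hn: "H n = T'" and K0: "K 0 = S" and Kn: "K n = S'"
    and Hfence: "\<And>t. 1 \<le> t \<Longrightarrow> t \<le> n \<Longrightarrow>
        (if odd t then map_le le (H (t - 1)) (H t) else map_le le (H t) (H (t - 1)))"
    and Kfence: "\<And>t. 1 \<le> t \<Longrightarrow> t \<le> n \<Longrightarrow>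
        (if odd t then map_le le (K t) (K (t - 1)) else map_le le (K (t - 1)) (K t))"
    and iso: "\<And>t. 1 \<le> t \<Longrightarrow> t \<le> n \<Longrightarrow> isotone le (H t)"
    and x0: "x0 \<in> Coin T S"
    and odd_cov: "\<And>t. 1 \<le> t \<Longrightarrow> t \<le> n \<Longrightarrow> odd t \<Longrightarrow> covers_above le (K t) (H t)"
    and odd_chain: "\<And>t C. 1 \<le> t \<Longrightarrow> t \<le> n \<Longrightarrow> odd t \<Longrightarrow> C \<in> chains_Cstar (H t) (K t) le \<Longrightarrow>
        \<exists>w. (\<forall>c\<in>C. le c w) \<and> le (H t w) w \<and>
          (\<exists>z. (\<forall>i\<ge>1. le (K t w) ((K t ^^ i) z) \<and> le (H t w) (K t w)) \<and>
               (\<lambda>i. d ((H t ^^ i) w) ((K t ^^ i) z)) \<longlonglongrightarrow> 0)"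
    and even_cov: "\<And>t. 1 \<le> t \<Longrightarrow> t \<le> n \<Longrightarrow> even t \<Longrightarrow> covers le (K t) (H t)"
    and even_chain: "\<And>t C. 1 \<le> t \<Longrightarrow> t \<le> n \<Longrightarrow> even t \<Longrightarrow> C \<in> chains_C (H t) (K t) le \<Longrightarrow>
        \<exists>w'. (\<forall>c\<in>C. le w' c) \<and> le w' (H t w') \<and>
          (\<exists>z'. (\<forall>i\<ge>1. le ((K t ^^ i) z') (K t w') \<and> le (K t w') (H t w')) \<and>
               (\<lambda>i. d ((H t ^^ i) w') ((K t ^^ i) z')) \<longlonglongrightarrow> 0)"
  shows "\<exists>x :: nat \<Rightarrow> 'a. x 0 = x0 \<and>
     (\<forall>t. 1 \<le> t \<and> t \<le> n \<longrightarrow>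
        (if odd t then le (x (t - 1)) (x t) \<and>
              is_maximal le (x t) (Coin (H t) (K t) \<inter> O_above le (x (t - 1)))
         else le (x t) (x (t - 1)) \<and>
              is_minimal le (x t) (Coin (H t) (K t) \<inter> O_below le (x (t - 1)))))"
proof -
  have refl: "\<And>x. le x x" and trans: "\<And>x y z. le x y \<Longrightarrow> le y z \<Longrightarrow> le x z"
    and reg: "\<And>x y z. le x y \<Longrightarrow> le y z \<Longrightarrow> max (d x y) (d y z) \<le> s\<^sup>2 * d x z"
    and dnn: "\<And>x y. d x y \<ge> 0" and d0: "\<And>x y. d x y = 0 \<Longrightarrow> x = y"
    and dsym: "\<And>x y. d x y = d y x"
    using space unfolding preordered_s_regular_b_metric_def b_metric_def is_preorder_def by blast+
  have antis: "x = y" if "le x y" "le y x" for x y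
  proof -
    have "max (d x y) (d y x) \<le> s\<^sup>2 * d x x" using reg[OF that] .
    moreover have "d x x = 0" using space unfolding preordered_s_regular_b_metric_def b_metric_def by blast
    ultimately have "d x y \<le> 0" by simp
    then show ?thesis using dnn[of x y] d0 by (simp add: antisym)
  qed
  define P where "P = (\<lambda>t p y. if odd t then le p y \<and>
              is_maximal le y (Coin (H t) (K t) \<inter> O_above le p)
         else le y p \<and>
              is_minimal le y (Coin (H t) (K t) \<inter> O_below le p))"
  have step: "\<exists>y. P t p y" if t: "1 \<le> t" "t \<le> n" and p: "p \<in> Coin (H (t - 1)) (K (t - 1))" for t p
  proof (cases "odd t")
    case True
    have "le (K t p) (K (t - 1) p)" using Kfence[OF t] True unfolding map_le_def by simp
    moreover have "le (H (t - 1) p) (H t p)" using Hfence[OF t] True unfolding map_le_def by simp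
    ultimately have "le (K t p) (H t p)" using p trans unfolding Coin_def by fastforce
    from core[OF refl trans antis reg dnn d0 iso[OF t] odd_cov[OF t True] odd_chain[OF t True] this]
    show ?thesis unfolding P_def using True by auto
  next
    case False
    have "le (K (t - 1) p) (K t p)" using Kfence[OF t] False unfolding map_le_def by simp
    moreover have "le (H t p) (H (t - 1) p)" using Hfence[OF t] False unfolding map_le_def by simp
    ultimately have "le (H t p) (K t p)" using p trans unfolding Coin_def by fastforce
    from core_min[OF refl trans antis reg dnn d0 dsym iso[OF t] even_cov[OF t] even_chain[OF t] this] False
    show ?thesis unfolding P_def using False by auto
  qed
  define x where "x = rec_nat x0 (\<lambda>t p. SOME y. P (Suc t) p y)"
  have x0': "x 0 = x0" unfolding x_def by simp
  have xS: "x (Suc t) = (SOME y. P (Suc t) (x t) y)" for t unfolding x_def by simp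
  have inv: "x t \<in> Coin (H t) (K t) \<and> (1 \<le> t \<longrightarrow> P t (x (t - 1)) (x t))" if "t \<le> n" for t
    using that
  proof (induction t)
    case 0 then show ?case using x0 x0' H0 K0 by simp
  next
    case (Suc t)
    have "x t \<in> Coin (H t) (K t)" using Suc by simp
    then have "\<exists>y. P (Suc t) (x t) y" using step[of "Suc t" "x t"] Suc.prems by simp
    then have "P (Suc t) (x t) (x (Suc t))" unfolding xS by (rule someI_ex)
    moreover then have "x (Suc t) \<in> Coin (H (Suc t)) (K (Suc t))"
      unfolding P_def is_maximal_def is_minimal_def by (auto split: if_splits)
    ultimately show ?case by simp
  qed
  show ?thesis
  proof (intro exI conjI allI impI)
    show "x 0 = x0" by (rule x0')
    fix t assume "1 \<le> t \<and> t \<le> n"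
    then have "P t (x (t - 1)) (x t)" using inv by blast
    then show "if odd t then le (x (t - 1)) (x t) \<and>
              is_maximal le (x t) (Coin (H t) (K t) \<inter> O_above le (x (t - 1)))
         else le (x t) (x (t - 1)) \<and>
              is_minimal le (x t) (Coin (H t) (K t) \<inter> O_below le (x (t - 1)))"
      unfolding P_def .
  qed
qed

end
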